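(* Let $k$ be a field of characteristic zero and $f,g\in k[x,y,z]$. Suppose $\gcd(d(L(f)),d(L(g)))\in k[x]\setminus k$, $g$ is primitive and $g(x,0,0)=0$. Assume there exist non-negative integers $p,q$ with $(p,q)\ne(0,0)$ such that, for the grading $\deg y=p$, $\deg z=q$, the polynomial $\overline f$ is primitive and $\deg\overline f>\deg\overline g$. Then there is no $k[x]$-automorphism $\zeta$ of $k[x,y,z]$ with $\zeta(y)=u_1(v_0g+F_0(f))$ for any $u_1,v_0\in k(x)$ and $F_0\in k(x)[t]$.
   Context: Polynomials in $k[x,y,z]$ (or $k(x)[y,z]$) are regarded as polynomials in $y,z$ with coefficients in $k[x]$ (or $k(x)$). For $h\in k[x,y,z]$, $d(h)$ is the greatest common divisor in $k[x]$ of the coefficients of $h$ as a polynomial in $y,z$; $h$ is primitive if $d(h)=1$ (up to units). $L(h)$ is the sum of the terms of $h$ of total degree exactly $1$ in $y,z$. For the $\mathbb Z$-grading with $\deg y=p$, $\deg z=q$, $\overline h$ is the sum of the terms of $h$ of highest degree, and $\deg\overline h$ is that degree. *)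

theory Defs
  imports "HOL-Computational_Algebra.Computational_Algebra"
begin

text \<open>k[x,y,z] is represented as the nested polynomial type 'k poly poly poly:
  the innermost variable is x, the middle one is y, the outermost one is z.
  k(x)[y,z] is represented as ('k poly fract) poly poly (inner y, outer z).\<close>

type_synonym 'k pxyz = "'k poly poly poly"
type_synonym 'k pfyz = "'k poly fract poly poly"

definition cf :: "'k::zero pxyz \<Rightarrow> nat \<Rightarrow> nat \<Rightarrow> 'k poly" where
  "cf h i j = coeff (coeff h j) i"

definition mono :: "'k::zero poly \<Rightarrow> nat \<Rightarrow> nat \<Rightarrow> 'k pxyz" where
  "mono c i j = monom (monom c i) j"

definition dcont :: "'k::{field,field_gcd} pxyz \<Rightarrow> 'k poly" where
  "dcont h = Gcd {cf h i j | i j. True}"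

definition primitive :: "'k::{field,field_gcd} pxyz \<Rightarrow> bool" where
  "primitive h \<longleftrightarrow> is_unit (dcont h)"

definition Lin :: "'k::comm_monoid_add pxyz \<Rightarrow> 'k pxyz" where
  "Lin h = mono (cf h 1 0) 1 0 + mono (cf h 0 1) 0 1"

definition wdeg :: "nat \<Rightarrow> nat \<Rightarrow> 'k::zero pxyz \<Rightarrow> nat" where
  "wdeg p q h = Max {p * i + q * j | i j. cf h i j \<noteq> 0}"

definition top :: "nat \<Rightarrow> nat \<Rightarrow> 'k::comm_monoid_add pxyz \<Rightarrow> 'k pxyz" where
  "top p q h = (\<Sum>j\<le>degree h. \<Sum>i\<le>degree (coeff h j).
      if p * i + q * j = wdeg p q h then mono (cf h i j) i j else 0)"

definition Yv :: "'k::comm_ring_1 pxyz" where "Yv = monom (monom 1 1) 0"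
definition Zv :: "'k::comm_ring_1 pxyz" where "Zv = monom 1 1"

definition kx_automorphism :: "('k::comm_ring_1 pxyz \<Rightarrow> 'k pxyz) \<Rightarrow> bool" where
  "kx_automorphism \<zeta> \<longleftrightarrow> bij \<zeta> \<and>
     (\<forall>a b. \<zeta> (a + b) = \<zeta> a + \<zeta> b) \<and> (\<forall>a b. \<zeta> (a * b) = \<zeta> a * \<zeta> b) \<and>
     \<zeta> 1 = 1 \<and> (\<forall>c. \<zeta> [:[:c:]:] = [:[:c:]:])"

definition emb :: "'k::idom pxyz \<Rightarrow> 'k pfyz" where
  "emb h = map_poly (map_poly (\<lambda>c. Fract c 1)) h"

definition subst_t :: "'k::idom poly fract poly \<Rightarrow> 'k pfyz \<Rightarrow> 'k pfyz" where
  "subst_t F h = poly (map_poly (\<lambda>c. [:[:c:]:]) F) h"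

end

theory Submission
  imports Defs
begin


definition rhom :: "('a::comm_ring_1 \<Rightarrow> 'b::comm_ring_1) \<Rightarrow> bool" where
 "rhom \<phi> \<longleftrightarrow> \<phi> 0 = 0 \<and> \<phi> 1 = 1 \<and> (\<forall>a b. \<phi> (a+b) = \<phi> a + \<phi> b) \<and> (\<forall>a b. \<phi> (a*b) = \<phi> a * \<phi> b)"

lemma rhomD: assumes "rhom \<phi>" shows "\<phi> 0 = 0" "\<phi> 1 = 1" "\<phi> (a+b) = \<phi> a + \<phi> b" "\<phi> (a*b) = \<phi> a * \<phi> b"
  using assms by (auto simp: rhom_def)

lemma rhom_sum: assumes "rhom \<phi>" shows "\<phi> (sum f A) = (\<Sum>x\<in>A. \<phi> (f x))"
proof (cases "finite A")
  case True then show ?thesis by (induction A rule: finite_induct) (auto simp: rhomD[OF assms])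
qed (simp add: rhomD[OF assms])

lemma rhom_power: assumes "rhom \<phi>" shows "\<phi> (a ^ n) = \<phi> a ^ n"
  by (induction n) (auto simp: rhomD[OF assms])

lemma rhom_map_poly: assumes "rhom \<phi>" shows "rhom (map_poly \<phi>)"
  unfolding rhom_def
proof (intro conjI allI)
  show "map_poly \<phi> 0 = 0" by simp
  show "map_poly \<phi> 1 = 1" using rhomD[OF assms] by simp
  fix a b :: "'a poly"
  show "map_poly \<phi> (a + b) = map_poly \<phi> a + map_poly \<phi> b"
    by (intro poly_eqI) (simp add: coeff_map_poly rhomD[OF assms])
  show "map_poly \<phi> (a * b) = map_poly \<phi> a * map_poly \<phi> b"
    by (intro poly_eqI) (simp add: coeff_map_poly rhomD[OF assms] coeff_mult rhom_sum[OF assms])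
qed

lemma rhom_poly: "rhom (\<lambda>P. poly P x)"
  by (simp add: rhom_def)

lemma rhom_comp: "rhom \<phi> \<Longrightarrow> rhom \<psi> \<Longrightarrow> rhom (\<lambda>x. \<psi> (\<phi> x))"
  by (simp add: rhom_def)

lemma rhom_const: "rhom (\<lambda>c. [:c:])"
  by (simp add: rhom_def)

lemma poly_map_sum:
  fixes \<phi> :: "'a::zero \<Rightarrow> 'b::comm_semiring_1"
  assumes "\<phi> 0 = 0"
  shows "poly (map_poly \<phi> P) x = (\<Sum>j\<le>degree P. \<phi> (coeff P j) * x ^ j)"
proof -
  have "poly (map_poly \<phi> P) x = (\<Sum>j\<le>degree (map_poly \<phi> P). coeff (map_poly \<phi> P) j * x ^ j)"
    by (rule poly_altdef)
  also have "\<dots> = (\<Sum>j\<le>degree P. coeff (map_poly \<phi> P) j * x ^ j)"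
  proof (rule sum.mono_neutral_left)
    have "degree (map_poly \<phi> P) \<le> degree P"
      by (rule degree_le) (simp add: coeff_map_poly assms coeff_eq_0)
    then show "{..degree (map_poly \<phi> P)} \<subseteq> {..degree P}" by auto
  qed (auto simp: coeff_eq_0)
  finally show ?thesis by (simp add: coeff_map_poly assms)
qed

lemma cf_add[simp]: "cf (P + Q) i j = cf P i j + cf Q i j" by (simp add: cf_def)
lemma cf_0[simp]: "cf 0 i j = 0" by (simp add: cf_def)
lemma cf_sum: "cf (sum f A) i j = (\<Sum>x\<in>A. cf (f x) i j)"
  by (cases "finite A", induction A rule: finite_induct) (auto)
lemma cf_const_mult[simp]: "cf ([:[:c:]:] * P) i j = c * cf P i j"
  by (simp add: cf_def)
lemma cf_smult_const[simp]: "cf (smult [:c:] P) i j = c * cf P i j"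
  by (simp add: cf_def)
lemma cf_const[simp]: "cf [:[:c:]:] i j = (if i = 0 \<and> j = 0 then c else 0)"
  by (simp add: cf_def coeff_pCons split: nat.splits)
lemma cf_mono[simp]: "cf (mono c i' j') i j = (if i = i' \<and> j = j' then c else 0)"
  by (simp add: cf_def mono_def coeff_monom)
lemma cf_Yv[simp]: "cf (Yv::'k::comm_ring_1 pxyz) i j = (if i = 1 \<and> j = 0 then 1 else 0)"
  by (simp add: cf_def Yv_def coeff_monom)
lemma cf_Zv[simp]: "cf (Zv::'k::comm_ring_1 pxyz) i j = (if i = 0 \<and> j = 1 then 1 else 0)"
  by (simp add: cf_def Zv_def coeff_monom)

lemma cf_inject: "(\<And>i j. cf P i j = cf Q i j) \<Longrightarrow> P = Q"
  by (intro poly_eqI) (simp add: cf_def poly_eq_iff)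

lemma coeff_mult_1: "coeff (p * q) (Suc 0) = coeff p 0 * coeff q (Suc 0) + coeff p (Suc 0) * coeff q 0"
  by (simp add: coeff_mult atMost_Suc algebra_simps)

lemma cf_mult_00: "cf ((P::'a::comm_semiring_1 pxyz) * Q) 0 0 = cf P 0 0 * cf Q 0 0"
  by (simp add: cf_def coeff_mult_0)
lemma cf_mult_10: "cf ((P::'a::comm_semiring_1 pxyz) * Q) (Suc 0) 0 = cf P (Suc 0) 0 * cf Q 0 0 + cf P 0 0 * cf Q (Suc 0) 0"
  by (simp add: cf_def coeff_mult_0 coeff_mult_1 algebra_simps)
lemma cf_mult_01: "cf ((P::'a::comm_semiring_1 pxyz) * Q) 0 (Suc 0) = cf P 0 (Suc 0) * cf Q 0 0 + cf P 0 0 * cf Q 0 (Suc 0)"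
  by (simp add: cf_def coeff_mult_0 coeff_mult_1 algebra_simps)

lemma gen_induct:
  fixes Q :: "'k::comm_ring_1 pxyz \<Rightarrow> bool"
  assumes add: "\<And>a b. Q a \<Longrightarrow> Q b \<Longrightarrow> Q (a + b)"
    and mul: "\<And>a b. Q a \<Longrightarrow> Q b \<Longrightarrow> Q (a * b)"
    and const: "\<And>c. Q [:[:c:]:]" and y: "Q Yv" and z: "Q Zv"
  shows "Q P"
proof -
  have cst: "Q [:a:]" for a
  proof (induction a)
    case 0 then show ?case using const[of 0] by simp
  next
    case (pCons c a)
    have e1: "monom (1::'k poly) 1 * a = pCons 0 a" by (simp add: monom_Suc)
    have "Yv * [:a:] = [:monom 1 1 * a:]" by (simp add: Yv_def monom_0)
    then have "[:pCons c a:] = [:[:c:]:] + Yv * [:a:]" using e1 by simp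
    then show ?case using add[OF const mul[OF y pCons(2)]] by simp
  qed
  show ?thesis
  proof (induction P)
    case 0 then show ?case using cst[of 0] by simp
  next
    case (pCons a P)
    have "pCons a P = [:a:] + Zv * P"
      by (simp add: Zv_def monom_Suc)
    then show ?case using add[OF cst mul[OF z pCons(2)]] by simp
  qed
qed

lemma partA:
  fixes \<zeta> :: "'k::field pxyz \<Rightarrow> 'k pxyz"
  assumes aut: "kx_automorphism \<zeta>" and c1: "c dvd cf (\<zeta> Yv) 1 0" and c2: "c dvd cf (\<zeta> Yv) 0 1"
  shows "is_unit c"
proof -
  define a1 where "a1 = cf (\<zeta> Yv) 1 0"
  define b1 where "b1 = cf (\<zeta> Yv) 0 1"
  define a2 where "a2 = cf (\<zeta> Zv) 1 0"
  define b2 where "b2 = cf (\<zeta> Zv) 0 1"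
  have add: "\<zeta> (a + b) = \<zeta> a + \<zeta> b" and mul: "\<zeta> (a * b) = \<zeta> a * \<zeta> b"
    and cst: "\<zeta> [:[:c:]:] = [:[:c:]:]" and sj: "surj \<zeta>" for a b c
    using aut by (auto simp: kx_automorphism_def bij_def)
  have key: "\<exists>e1 e2. cf (\<zeta> P) 1 0 = e1*a1 + e2*a2 \<and> cf (\<zeta> P) 0 1 = e1*b1 + e2*b2" for P
  proof (induction P rule: gen_induct)
    case (1 a b)
    then obtain e1 e2 e1' e2' where "cf (\<zeta> a) 1 0 = e1*a1 + e2*a2" "cf (\<zeta> a) 0 1 = e1*b1 + e2*b2"
      "cf (\<zeta> b) 1 0 = e1'*a1 + e2'*a2" "cf (\<zeta> b) 0 1 = e1'*b1 + e2'*b2" by blast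
    then show ?case by (intro exI[of _ "e1+e1'"] exI[of _ "e2+e2'"]) (simp add: add algebra_simps)
  next
    case (2 a b)
    then obtain e1 e2 e1' e2' where "cf (\<zeta> a) 1 0 = e1*a1 + e2*a2" "cf (\<zeta> a) 0 1 = e1*b1 + e2*b2"
      "cf (\<zeta> b) 1 0 = e1'*a1 + e2'*a2" "cf (\<zeta> b) 0 1 = e1'*b1 + e2'*b2" by blast
    then show ?case
      by (intro exI[of _ "e1 * cf (\<zeta> b) 0 0 + cf (\<zeta> a) 0 0 * e1'"] exI[of _ "e2 * cf (\<zeta> b) 0 0 + cf (\<zeta> a) 0 0 * e2'"])
        (simp add: mul cf_mult_10 cf_mult_01 algebra_simps)
  next
    case (3 c) then show ?case by (intro exI[of _ 0]) (simp add: cst)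
  next
    case 4 then show ?case by (intro exI[of _ 1] exI[of _ 0]) (simp add: a1_def b1_def)
  next
    case 5 then show ?case by (intro exI[of _ 0] exI[of _ 1]) (simp add: a2_def b2_def)
  qed
  obtain Py Pz where "\<zeta> Py = Yv" "\<zeta> Pz = Zv" using sj by (metis surjD)
  then obtain e1 e2 e1' e2' where
    "1 = e1*a1 + e2*a2" "0 = e1*b1 + e2*b2" "0 = e1'*a1 + e2'*a2" "1 = e1'*b1 + e2'*b2"
    using key[of Py] key[of Pz] by auto
  moreover have "(a1*b2 - a2*b1) * (e1*e2' - e1'*e2) = (e1*a1 + e2*a2)*(e1'*b1 + e2'*b2) - (e1'*a1 + e2'*a2)*(e1*b1 + e2*b2)"
    by (simp add: algebra_simps)
  ultimately have "(a1*b2 - a2*b1) * (e1*e2' - e1'*e2) = 1" by simp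
  moreover have "c dvd (a1*b2 - a2*b1)" using c1 c2 by (simp add: a1_def b1_def)
  ultimately show ?thesis by (metis dvd_mult2 dvd_triv_left dvd_trans)
qed

definition C3 :: "'k::comm_ring_1 poly \<Rightarrow> 'k pxyz poly" where "C3 c = [:[:[:c:]:]:]"
definition T1 :: "nat \<Rightarrow> 'k::comm_ring_1 poly poly \<Rightarrow> 'k pxyz poly" where
  "T1 p a = poly (map_poly C3 a) (monom Yv p)"
definition TT :: "nat \<Rightarrow> nat \<Rightarrow> 'k::comm_ring_1 pxyz \<Rightarrow> 'k pxyz poly" where
  "TT p q P = poly (map_poly (T1 p) P) (monom Zv q)"

lemma rhom_C3: "rhom C3"
proof -
  have "rhom (\<lambda>c. [:[:[:c:]:]:] :: 'a pxyz poly)"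
    using rhom_comp[OF rhom_comp[OF rhom_const rhom_const] rhom_const] by simp
  then show ?thesis by (simp add: C3_def[abs_def])
qed

lemma rhom_T1: "rhom (T1 p)"
  unfolding T1_def[abs_def] by (rule rhom_comp[OF rhom_map_poly[OF rhom_C3] rhom_poly])

lemma rhom_TT: "rhom (TT p q)"
  unfolding TT_def[abs_def] by (rule rhom_comp[OF rhom_map_poly[OF rhom_T1] rhom_poly])

lemma TT_const: "TT p q [:[:c:]:] = C3 c"
  by (simp add: TT_def T1_def map_poly_pCons rhomD[OF rhom_T1] rhomD[OF rhom_C3])

lemma mono_term: "C3 c * monom Yv p ^ i * monom Zv q ^ j = monom (mono c i j) (p*i+q*j)"
proof -
  have "C3 c = monom [:[:c:]:] 0" by (simp add: C3_def monom_0)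
  moreover have "[:[:c:]:] * Yv ^ i * Zv ^ j = mono c i j"
    by (simp add: Yv_def Zv_def mono_def monom_power mult_monom monom_0[symmetric])
  ultimately show ?thesis by (simp add: monom_power mult_monom mult.commute add.commute)
qed

lemma TT_expand: "TT p q P = (\<Sum>j\<le>degree P. \<Sum>i\<le>degree (coeff P j). monom (mono (cf P i j) i j) (p*i+q*j))"
proof -
  have "TT p q P = (\<Sum>j\<le>degree P. T1 p (coeff P j) * monom Zv q ^ j)"
    unfolding TT_def by (rule poly_map_sum) (rule rhomD[OF rhom_T1])
  also have "\<dots> = (\<Sum>j\<le>degree P. (\<Sum>i\<le>degree (coeff P j). C3 (cf P i j) * monom Yv p ^ i) * monom Zv q ^ j)"
    unfolding T1_def cf_def by (subst poly_map_sum) (simp_all add: rhomD[OF rhom_C3])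
  also have "\<dots> = (\<Sum>j\<le>degree P. \<Sum>i\<le>degree (coeff P j). monom (mono (cf P i j) i j) (p*i+q*j))"
    by (simp add: sum_distrib_right mono_term)
  finally show ?thesis .
qed

lemma coeff_TT: "coeff (TT p q P) d = (\<Sum>j\<le>degree P. \<Sum>i\<le>degree (coeff P j).
      if p * i + q * j = d then mono (cf P i j) i j else 0)"
  by (simp add: TT_expand coeff_sum coeff_monom)

lemma cf_if: "cf (if b then x else 0) i j = (if b then cf x i j else 0)" by simp

lemma cf_coeff_TT: "cf (coeff (TT p q P) d) i0 j0 = (if p*i0+q*j0 = d then cf P i0 j0 else 0)"
proof -
  define X where "X = (if p*i0+q*j0 = d then cf P i0 j0 else 0)"
  have "cf (coeff (TT p q P) d) i0 j0 = (\<Sum>j\<le>degree P. \<Sum>i\<le>degree (coeff P j).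
      if j = j0 then (if i = i0 then X else 0) else 0)"
    unfolding coeff_TT cf_sum cf_if cf_mono X_def by (intro sum.cong refl) auto
  also have "\<dots> = (\<Sum>j\<le>degree P. if j = j0 then (\<Sum>i\<le>degree (coeff P j). if i = i0 then X else 0) else 0)"
    by (intro sum.cong refl) auto
  also have "\<dots> = X"
    by (auto simp: X_def cf_def coeff_eq_0)
  finally show ?thesis unfolding X_def .
qed

lemma cf_nz_bound: "cf P i j \<noteq> 0 \<Longrightarrow> j \<le> degree P \<and> i \<le> (\<Sum>j\<le>degree P. degree (coeff P j))"
proof -
  assume a: "cf P i j \<noteq> 0"
  then have j: "j \<le> degree P" by (metis cf_def coeff_0 le_degree)
  have "i \<le> degree (coeff P j)" using a by (metis cf_def le_degree)
  also have "\<dots> \<le> (\<Sum>j\<le>degree P. degree (coeff P j))"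
    by (rule member_le_sum) (use j in auto)
  finally show ?thesis using j by simp
qed

lemma wset_finite: "finite {p * i + q * j |i j. cf P i j \<noteq> 0}"
proof (rule finite_subset)
  show "{p * i + q * j |i j. cf P i j \<noteq> 0} \<subseteq> {..p * (\<Sum>j\<le>degree P. degree (coeff P j)) + q * degree P}"
    using cf_nz_bound by (force intro: add_mono mult_le_mono2)
qed simp

lemma wdeg_ge: "cf P i j \<noteq> 0 \<Longrightarrow> p * i + q * j \<le> wdeg p q P"
  unfolding wdeg_def by (rule Max_ge[OF wset_finite]) blast

lemma nz_cf: "P \<noteq> 0 \<Longrightarrow> \<exists>i j. cf P i j \<noteq> 0"
  using cf_inject[of P 0] by auto

lemma wdeg_attained: assumes "P \<noteq> 0" shows "\<exists>i j. cf P i j \<noteq> 0 \<and> p * i + q * j = wdeg p q P"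
proof -
  have "wdeg p q P \<in> {p * i + q * j |i j. cf P i j \<noteq> 0}"
    unfolding wdeg_def by (rule Max_in[OF wset_finite]) (use nz_cf[OF assms] in blast)
  then show ?thesis by (smt (verit) mem_Collect_eq)
qed

lemma coeff_TT_eq0: "coeff (TT p q P) d = 0 \<longleftrightarrow> (\<forall>i j. p*i+q*j = d \<longrightarrow> cf P i j = 0)"
proof
  assume "coeff (TT p q P) d = 0"
  then show "\<forall>i j. p*i+q*j = d \<longrightarrow> cf P i j = 0"
    using cf_coeff_TT[of p q P d] by (metis cf_0)
next
  assume "\<forall>i j. p*i+q*j = d \<longrightarrow> cf P i j = 0"
  then show "coeff (TT p q P) d = 0"
    by (intro cf_inject) (simp add: cf_coeff_TT)
qed

lemma top_eq: "top p q P = coeff (TT p q P) (wdeg p q P)"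
  by (simp add: top_def coeff_TT)

lemma top_nz: fixes P :: "'k::comm_ring_1 pxyz" assumes "P \<noteq> 0" shows "top p q P \<noteq> 0"
proof -
  obtain i j where "cf P i j \<noteq> 0" "p * i + q * j = wdeg p q P" using wdeg_attained[OF assms] by blast
  then have "coeff (TT p q P) (wdeg p q P) \<noteq> 0" by (subst coeff_TT_eq0) blast
  then show ?thesis by (simp add: top_eq)
qed

lemma degree_TT: assumes "P \<noteq> 0" shows "degree (TT p q P) = wdeg p q P"
proof (rule antisym)
  show "degree (TT p q P) \<le> wdeg p q P"
  proof (rule degree_le, intro allI impI)
    fix d assume "wdeg p q P < d"
    then show "coeff (TT p q P) d = 0"
      unfolding coeff_TT_eq0 using wdeg_ge[of P _ _ p q] by (metis not_le)
  qed
  show "wdeg p q P \<le> degree (TT p q P)"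
    by (rule le_degree) (use top_nz[OF assms] in \<open>simp add: top_eq\<close>)
qed

lemma lead_TT: "P \<noteq> 0 \<Longrightarrow> lead_coeff (TT p q P) = top p q P"
  by (simp add: degree_TT top_eq)

lemma TT_nz: "P \<noteq> 0 \<Longrightarrow> TT p q P \<noteq> 0"
  using top_nz[of P p q] lead_TT[of P p q] by auto

lemma cf_top: "cf (top p q (P::'k::comm_ring_1 pxyz)) i j = (if p*i+q*j = wdeg p q P then cf P i j else 0)"
  by (simp add: top_eq cf_coeff_TT)

lemma wdeg_top: fixes P :: "'k::comm_ring_1 pxyz" assumes "P \<noteq> 0" shows "wdeg p q (top p q P) = wdeg p q P"
proof -
  have "{p * i + q * j |i j. cf (top p q P) i j \<noteq> 0} = {wdeg p q P}"
    using wdeg_attained[OF assms, of p q] by (auto simp: cf_top)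
  then show ?thesis by (simp add: wdeg_def)
qed

lemma C2_dvd_iff: "[:[:c:]:] dvd (P::'k::field pxyz) \<longleftrightarrow> (\<forall>i j. c dvd cf P i j)"
  by (simp add: const_poly_dvd_iff cf_def) blast

lemma prime_C2: "prime_elem (c::'k::field poly) \<Longrightarrow> prime_elem [:[:c:]:]"
  by (simp add: prime_elem_const_poly_iff)

lemma dcont_greatest: "(\<And>i j. c dvd cf P i j) \<Longrightarrow> c dvd dcont P"
  unfolding dcont_def by (rule Gcd_greatest) blast

lemma dcont_dvd: "dcont P dvd cf P i j"
  unfolding dcont_def by (rule Gcd_dvd) blast

lemma primitive_not_dvd:
  assumes "primitive P" "prime_elem c" shows "\<not> [:[:c:]:] dvd P"
proof
  assume "[:[:c:]:] dvd P"
  then have "c dvd dcont P" by (intro dcont_greatest) (simp add: C2_dvd_iff)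
  then have "is_unit c" using assms(1) unfolding primitive_def by (metis dvd_unit_imp_unit)
  then show False using assms(2) by (simp add: prime_elem_def)
qed

lemma primitive_nz: "primitive P \<Longrightarrow> P \<noteq> 0"
  by (auto simp: primitive_def dcont_def)

lemma top_zero: "top p q (0::'k::comm_ring_1 pxyz) = 0"
  by (intro cf_inject) (simp add: cf_top)

lemma cf_pow_00: "cf ((P::'k::comm_ring_1 pxyz) ^ i) 0 0 = cf P 0 0 ^ i"
proof (induction i)
  case 0 then show ?case by (simp add: cf_def)
next
  case (Suc i) then show ?case by (simp add: cf_mult_00)
qed

lemma coeff_C3_mult: "coeff (C3 c * X) d = [:[:c:]:] * coeff X d"
  by (simp add: C3_def)

lemma core:
  fixes f g :: "'k::{field,field_gcd} pxyz"
  assumes g: "primitive g" and g0: "cf g 0 0 = 0" and tf: "primitive (top p q f)"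
    and deg: "wdeg p q (top p q f) > wdeg p q (top p q g)"
    and pr: "prime_elem \<pi>"
    and dv: "[:[:\<pi>:]:] dvd ([:[:A:]:] * g + (\<Sum>i\<le>n. [:[:B i:]:] * f ^ i))"
  shows "\<pi> dvd A \<and> (\<forall>i\<le>n. \<pi> dvd B i)"
proof -
  define PP where "PP = [:[:\<pi>:]:]"
  define S where "S = [:[:A:]:] * g + (\<Sum>i\<le>n. [:[:B i:]:] * f ^ i)"
  have prP: "prime_elem PP" unfolding PP_def by (rule prime_C2[OF pr])
  have gnz: "g \<noteq> 0" by (rule primitive_nz[OF g])
  have fnz: "f \<noteq> 0" using primitive_nz[OF tf] top_zero by metis
  define w where "w = degree (TT p q f)"
  have wg: "degree (TT p q g) < w"
    using deg unfolding w_def degree_TT[OF fnz] degree_TT[OF gnz] wdeg_top[OF fnz] wdeg_top[OF gnz] .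
  have Tfnz: "TT p q f \<noteq> 0" by (rule TT_nz[OF fnz])
  have dvB: "PP dvd [:[:b:]:]" if "\<pi> dvd b" for b using that by (simp add: PP_def)
  have step1: "\<forall>i. 1 \<le> i \<and> i \<le> n \<longrightarrow> \<pi> dvd B i"
  proof (rule ccontr)
    assume nt: "\<not> (\<forall>i. 1 \<le> i \<and> i \<le> n \<longrightarrow> \<pi> dvd B i)"
    define M where "M = {i. 1 \<le> i \<and> i \<le> n \<and> \<not> \<pi> dvd B i}"
    have Mne: "M \<noteq> {}" using nt by (auto simp: M_def)
    have Mfin: "finite M" by (rule finite_subset[of _ "{..n}"]) (auto simp: M_def)
    define m where "m = Max M"
    have mM: "m \<in> M" unfolding m_def using Mfin Mne by (rule Max_in)
    have mmax: "i \<in> M \<Longrightarrow> i \<le> m" for i unfolding m_def using Mfin by (rule Max_ge)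
    have m1: "1 \<le> m" "m \<le> n" "\<not> \<pi> dvd B m" using mM by (auto simp: M_def)
    have TS: "TT p q S = C3 A * TT p q g + (\<Sum>i\<le>n. C3 (B i) * TT p q f ^ i)"
      unfolding S_def by (simp only: rhomD(3,4)[OF rhom_TT] rhom_sum[OF rhom_TT] rhom_power[OF rhom_TT] TT_const)
    obtain S' where "S = PP * S'" using dv unfolding S_def PP_def by (auto elim: dvdE)
    then have "TT p q S = C3 \<pi> * TT p q S'" by (simp only: PP_def rhomD(4)[OF rhom_TT] TT_const)
    then have "coeff (TT p q S) d = PP * coeff (TT p q S') d" for d by (simp only: coeff_C3_mult PP_def)
    then have "PP dvd coeff (TT p q S) d" for d by simp
    then have d1: "PP dvd coeff (TT p q S) (m*w)" .
    have "coeff (TT p q S) (m*w) = [:[:A:]:] * coeff (TT p q g) (m*w) +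
        (\<Sum>i\<le>n. [:[:B i:]:] * coeff (TT p q f ^ i) (m*w))"
      by (simp add: TS coeff_sum coeff_C3_mult)
    also have "coeff (TT p q g) (m*w) = 0"
      using wg m1 by (intro coeff_eq_0) (metis less_le_trans mult_1 mult_le_mono1 mult.commute)
    also have "(\<Sum>i\<le>n. [:[:B i:]:] * coeff (TT p q f ^ i) (m*w)) =
       [:[:B m:]:] * coeff (TT p q f ^ m) (m*w) + (\<Sum>i\<in>{..n}-{m}. [:[:B i:]:] * coeff (TT p q f ^ i) (m*w))"
      by (rule sum.remove) (use m1 in auto)
    finally have eq: "coeff (TT p q S) (m*w) = [:[:B m:]:] * coeff (TT p q f ^ m) (m*w) +
        (\<Sum>i\<in>{..n}-{m}. [:[:B i:]:] * coeff (TT p q f ^ i) (m*w))" by simp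
    have "PP dvd (\<Sum>i\<in>{..n}-{m}. [:[:B i:]:] * coeff (TT p q f ^ i) (m*w))"
    proof (rule dvd_sum)
      fix i assume i: "i \<in> {..n}-{m}"
      show "PP dvd [:[:B i:]:] * coeff (TT p q f ^ i) (m*w)"
      proof (cases "i < m")
        case True
        have "degree (TT p q f ^ i) \<le> w * i" unfolding w_def by (rule degree_power_le)
        also have "w * i < m * w" using True wg by (simp add: mult.commute)
        finally have "coeff (TT p q f ^ i) (m*w) = 0" by (intro coeff_eq_0)
        then show ?thesis by simp
      next
        case False
        then have "i \<notin> M" using mmax i by force
        then have "\<pi> dvd B i" using False i m1 by (auto simp: M_def)
        then show ?thesis by (intro dvd_mult2 dvB)
      qed
    qed
    then have h1: "PP dvd [:[:B m:]:] * coeff (TT p q f ^ m) (m*w)"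
      using d1 unfolding eq by (simp add: dvd_add_left_iff)
    have ct: "coeff (TT p q f ^ m) (m*w) = top p q f ^ m"
    proof -
      have "degree (TT p q f ^ m) = m * w" unfolding w_def by (rule degree_power_eq[OF Tfnz])
      then have "coeff (TT p q f ^ m) (m*w) = lead_coeff (TT p q f ^ m)" by simp
      also have "\<dots> = lead_coeff (TT p q f) ^ m" by (rule lead_coeff_power)
      finally show ?thesis using lead_TT[OF fnz] by simp
    qed
    have "PP dvd [:[:B m:]:] * top p q f ^ m" using h1 unfolding ct .
    then have "PP dvd [:[:B m:]:] \<or> PP dvd top p q f ^ m" by (rule prime_elem_dvd_multD[OF prP])
    moreover have "\<not> PP dvd top p q f ^ m"
      using prime_elem_dvd_power[OF prP] primitive_not_dvd[OF tf pr] unfolding PP_def by blast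
    ultimately have "PP dvd [:[:B m:]:]" by blast
    then show False using m1 by (simp add: PP_def)
  qed
  have step2: "\<pi> dvd B 0"
  proof -
    have "\<pi> dvd cf S 0 0" using dv unfolding S_def C2_dvd_iff by blast
    also have "cf S 0 0 = (\<Sum>i\<le>n. B i * cf f 0 0 ^ i)"
      by (simp add: S_def g0 cf_sum cf_pow_00)
    also have "\<dots> = B 0 * cf f 0 0 ^ 0 + (\<Sum>i\<in>{..n}-{0}. B i * cf f 0 0 ^ i)"
      by (rule sum.remove) auto
    finally have "\<pi> dvd B 0 + (\<Sum>i\<in>{..n}-{0}. B i * cf f 0 0 ^ i)" by simp
    moreover have "\<pi> dvd (\<Sum>i\<in>{..n}-{0}. B i * cf f 0 0 ^ i)"
      using step1 by (intro dvd_sum) auto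
    ultimately show ?thesis by (simp add: dvd_add_left_iff)
  qed
  have allB: "\<forall>i\<le>n. \<pi> dvd B i" using step1 step2 by (metis less_one not_le)
  have hs: "PP dvd (\<Sum>i\<le>n. [:[:B i:]:] * f ^ i)" using allB by (intro dvd_sum dvd_mult2 dvB) auto
  have "PP dvd [:[:A:]:] * g" using dv[folded PP_def] dvd_add_left_iff[OF hs] by blast
  then have "PP dvd [:[:A:]:] \<or> PP dvd g" by (rule prime_elem_dvd_multD[OF prP])
  then have "\<pi> dvd A" using primitive_not_dvd[OF g pr] by (auto simp: PP_def)
  with allB show ?thesis by blast
qed

lemma C2_mult: "[:[:a * b:]:] = [:[:a:]:] * ([:[:b:]:] :: 'k::comm_ring_1 pxyz)"
  by simp

lemma clear:
  fixes f g :: "'k::{field,field_gcd} pxyz"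
  assumes g: "primitive g" and g0: "cf g 0 0 = 0" and tf: "primitive (top p q f)"
    and deg: "wdeg p q (top p q f) > wdeg p q (top p q g)"
  shows "D \<noteq> 0 \<Longrightarrow> [:[:D:]:] dvd ([:[:A:]:] * g + (\<Sum>i\<le>n. [:[:B i:]:] * f ^ i))
     \<Longrightarrow> D dvd A \<and> (\<forall>i\<le>n. D dvd B i)"
proof (induction "degree D" arbitrary: D A B rule: less_induct)
  case less
  show ?case
  proof (cases "is_unit D")
    case True then show ?thesis by (auto intro: unit_imp_dvd)
  next
    case False
    obtain \<pi> where pd: "\<pi> dvd D" and pp: "prime \<pi>" using prime_divisor_exists[OF less(2) False] by blast
    then obtain D' where D: "D = \<pi> * D'" by (auto elim: dvdE)
    have pe: "prime_elem \<pi>" using pp by (simp add: prime_def)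
    have pnz: "\<pi> \<noteq> 0" using pe by (auto simp: prime_elem_def)
    have D'nz: "D' \<noteq> 0" using less(2) D by auto
    have "[:[:\<pi>:]:] dvd [:[:D:]:]" using pd by simp
    then have cr: "\<pi> dvd A \<and> (\<forall>i\<le>n. \<pi> dvd B i)"
      using core[OF g g0 tf deg pe] dvd_trans less(3) by blast
    then obtain A' where A: "A = \<pi> * A'" by (auto elim: dvdE)
    define B' where "B' i = B i div \<pi>" for i
    have Bi: "B i = \<pi> * B' i" if "i \<le> n" for i using cr that by (simp add: B'_def)
    have Seq: "[:[:A:]:] * g + (\<Sum>i\<le>n. [:[:B i:]:] * f ^ i) =
        [:[:\<pi>:]:] * ([:[:A':]:] * g + (\<Sum>i\<le>n. [:[:B' i:]:] * f ^ i))"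
    proof -
      have "(\<Sum>i\<le>n. [:[:B i:]:] * f ^ i) = (\<Sum>i\<le>n. [:[:\<pi>:]:] * ([:[:B' i:]:] * f ^ i))"
      proof (intro sum.cong refl)
        fix i assume "i \<in> {..n}"
        then have "B i = \<pi> * B' i" using Bi by simp
        then show "[:[:B i:]:] * f ^ i = [:[:\<pi>:]:] * ([:[:B' i:]:] * f ^ i)"
          by (simp only: C2_mult mult.assoc)
      qed
      then show ?thesis unfolding A C2_mult by (simp only: sum_distrib_left distrib_left mult.assoc)
    qed
    have "[:[:\<pi>:]:] * [:[:D':]:] dvd [:[:\<pi>:]:] * ([:[:A':]:] * g + (\<Sum>i\<le>n. [:[:B' i:]:] * f ^ i))"
      using less(3) unfolding Seq D C2_mult .
    then have dv': "[:[:D':]:] dvd ([:[:A':]:] * g + (\<Sum>i\<le>n. [:[:B' i:]:] * f ^ i))"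
      using pnz by (subst (asm) dvd_mult_cancel_left) auto
    have "degree \<pi> \<noteq> 0" using pe pnz is_unit_iff_degree[OF pnz] by (auto simp: prime_elem_def)
    then have "degree D' < degree D" unfolding D using degree_mult_eq[OF pnz D'nz] by simp
    from less(1)[OF this D'nz dv'] have "D' dvd A' \<and> (\<forall>i\<le>n. D' dvd B' i)" .
    then show ?thesis unfolding D A using Bi by (auto intro: mult_dvd_mono)
  qed
qed


lemma fract_to: "d \<noteq> 0 \<Longrightarrow> to_fract d * Fract a d = to_fract a"
  by (simp add: to_fract_def eq_fract)

lemma common_denom:
  fixes X :: "'a::idom fract set"
  assumes "finite X"
  shows "\<exists>D. D \<noteq> 0 \<and> (\<forall>x\<in>X. \<exists>a. to_fract D * x = to_fract a)"
  using assms
proof (induction X rule: finite_induct)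
  case empty
  show ?case by (rule exI[of _ 1]) simp
next
  case (insert x X)
  from insert.IH obtain D where D: "D \<noteq> 0" "\<forall>x\<in>X. \<exists>a. to_fract D * x = to_fract a" by blast
  obtain a d where x: "x = Fract a d" and d: "d \<noteq> 0" by (cases x) blast
  have "to_fract (D * d) * x = to_fract D * (to_fract d * Fract a d)"
    unfolding x to_fract_mult by (simp only: mult_ac)
  also have "\<dots> = to_fract (D * a)" by (simp only: fract_to[OF d] to_fract_mult)
  finally have x1: "\<exists>b. to_fract (D * d) * x = to_fract b" by (rule exI)
  have x2: "\<exists>b. to_fract (D * d) * y = to_fract b" if yX: "y \<in> X" for y
  proof -
    obtain b where b: "to_fract D * y = to_fract b" using bspec[OF D(2) yX] by (elim exE)
    have "to_fract (D * d) * y = to_fract d * (to_fract D * y)" unfolding to_fract_mult by (simp only: mult_ac)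
    also have "\<dots> = to_fract (d * b)" by (simp only: b to_fract_mult)
    finally show ?thesis by (rule exI)
  qed
  show ?case
  proof (rule exI[of _ "D*d"], intro conjI ballI)
    show "D * d \<noteq> 0" using D d by simp
    fix y assume y: "y \<in> insert x X"
    show "\<exists>b. to_fract (D*d) * y = to_fract b"
    proof (cases "y = x")
      case True then show ?thesis using x1 by simp
    next
      case False then have "y \<in> X" using y by simp
      then show ?thesis by (rule x2)
    qed
  qed
qed

lemma rhom_to_fract: "rhom to_fract" by (simp add: rhom_def)

lemma emb_alt: "emb h = map_poly (map_poly to_fract) h"
  by (simp add: emb_def to_fract_def[abs_def])

lemma rhom_emb: "rhom (emb :: 'k::idom pxyz \<Rightarrow> _)"
  unfolding emb_alt[abs_def] by (intro rhom_map_poly rhom_to_fract)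

lemma coeff_emb: "coeff (coeff (emb h) j) i = to_fract (cf h i j)"
  by (simp add: emb_alt coeff_map_poly cf_def)

lemma emb_const: "emb [:[:c:]:] = [:[:to_fract c:]:]"
proof (rule poly_eqI)
  fix n show "coeff (emb [:[:c:]:]) n = coeff [:[:to_fract c:]:] n"
    by (subst poly_eq_iff) (auto simp: coeff_emb coeff_pCons split: nat.split)
qed

lemma emb_inj: "emb P = emb Q \<Longrightarrow> P = Q"
proof (intro cf_inject)
  fix i j assume "emb P = emb Q"
  then have "to_fract (cf P i j) = to_fract (cf Q i j)" using coeff_emb[of P j i] coeff_emb[of Q j i] by simp
  then show "cf P i j = cf Q i j" by simp
qed

lemma r_dvd_pow:
  fixes f :: "'k::comm_ring_1 pxyz"
  assumes "r dvd cf f (Suc 0) 0" "r dvd cf f 0 (Suc 0)"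
  shows "r dvd cf (f ^ i) (Suc 0) 0 \<and> r dvd cf (f ^ i) 0 (Suc 0)"
proof (induction i)
  case 0 then show ?case by (simp add: cf_def)
next
  case (Suc i)
  have a: "cf (f ^ Suc i) (Suc 0) 0 = cf f (Suc 0) 0 * cf (f ^ i) 0 0 + cf f 0 0 * cf (f ^ i) (Suc 0) 0"
    unfolding power_Suc by (rule cf_mult_10)
  have b: "cf (f ^ Suc i) 0 (Suc 0) = cf f 0 (Suc 0) * cf (f ^ i) 0 0 + cf f 0 0 * cf (f ^ i) 0 (Suc 0)"
    unfolding power_Suc by (rule cf_mult_01)
  show ?case unfolding a b
    using dvd_add[OF dvd_mult2[OF assms(1)] dvd_mult[OF conjunct1[OF Suc]]]
          dvd_add[OF dvd_mult2[OF assms(2)] dvd_mult[OF conjunct2[OF Suc]]] by blast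
qed


lemma C2_mult': "[:[:a * b:]:] = [:[:a:]:] * ([:[:b:]:] :: 'a::comm_ring_1 poly poly)"
  by simp

theorem proposition4p13:
  fixes f g :: "'k::{field_char_0,field_gcd} pxyz"
  assumes "degree (gcd (dcont (Lin f)) (dcont (Lin g))) > 0"
    and "primitive g"
    and "cf g 0 0 = 0"
    and "(p, q) \<noteq> ((0::nat), (0::nat))"
    and "primitive (top p q f)"
    and "wdeg p q (top p q f) > wdeg p q (top p q g)"
  shows "\<not> (\<exists>\<zeta> (u1::'k poly fract) (v0::'k poly fract) (F0::'k poly fract poly).
            kx_automorphism \<zeta> \<and>
            emb (\<zeta> Yv) = [:[:u1:]:] * ([:[:v0:]:] * emb g + subst_t F0 (emb f)))"
proof
  assume "\<exists>\<zeta> (u1::'k poly fract) (v0::'k poly fract) (F0::'k poly fract poly).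
            kx_automorphism \<zeta> \<and>
            emb (\<zeta> Yv) = [:[:u1:]:] * ([:[:v0:]:] * emb g + subst_t F0 (emb f))"
  then obtain \<zeta> u1 v0 F0 where aut: "kx_automorphism \<zeta>"
    and eq: "emb (\<zeta> Yv) = [:[:u1:]:] * ([:[:v0:]:] * emb g + subst_t F0 (emb f))" by blast
  define h where "h = \<zeta> Yv"
  define r where "r = gcd (dcont (Lin f)) (dcont (Lin g))"
  have cfLin: "cf (Lin P) (Suc 0) 0 = cf P (Suc 0) 0" "cf (Lin P) 0 (Suc 0) = cf P 0 (Suc 0)"
    for P :: "'k pxyz" by (simp_all add: Lin_def)
  have rf1: "r dvd cf f (Suc 0) 0"
    using dvd_trans[OF gcd_dvd1 dcont_dvd[of "Lin f" "Suc 0" 0]] unfolding r_def cfLin .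
  have rf2: "r dvd cf f 0 (Suc 0)"
    using dvd_trans[OF gcd_dvd1 dcont_dvd[of "Lin f" 0 "Suc 0"]] unfolding r_def cfLin .
  have rg1: "r dvd cf g (Suc 0) 0"
    using dvd_trans[OF gcd_dvd2 dcont_dvd[of "Lin g" "Suc 0" 0]] unfolding r_def cfLin .
  have rg2: "r dvd cf g 0 (Suc 0)"
    using dvd_trans[OF gcd_dvd2 dcont_dvd[of "Lin g" 0 "Suc 0"]] unfolding r_def cfLin .
  define n where "n = degree F0"
  define X where "X = insert (u1 * v0) ((\<lambda>i. u1 * coeff F0 i) ` {..n})"
  have "finite X" by (simp add: X_def)
  then obtain D where D: "D \<noteq> 0" "\<forall>x\<in>X. \<exists>a. to_fract D * x = to_fract a"
    using common_denom by blast
  have "u1 * v0 \<in> X" by (simp add: X_def)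
  obtain A where A: "to_fract D * (u1 * v0) = to_fract A"
    using bspec[OF D(2) \<open>u1 * v0 \<in> X\<close>] by (elim exE)
  have "\<forall>i\<in>{..n}. \<exists>b. to_fract D * (u1 * coeff F0 i) = to_fract b"
  proof
    fix i assume "i \<in> {..n}"
    then have "u1 * coeff F0 i \<in> X" unfolding X_def by (intro insertI2 imageI)
    from bspec[OF D(2) this] show "\<exists>b. to_fract D * (u1 * coeff F0 i) = to_fract b" .
  qed
  from bchoice[OF this] obtain B where B: "\<forall>i\<in>{..n}. to_fract D * (u1 * coeff F0 i) = to_fract (B i)"
    by (elim exE)
  have sub: "subst_t F0 (emb f) = (\<Sum>i\<le>n. [:[:coeff F0 i:]:] * emb f ^ i)"
    unfolding subst_t_def n_def by (rule poly_map_sum) simp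
  have "emb ([:[:D:]:] * h) = emb ([:[:A:]:] * g + (\<Sum>i\<le>n. [:[:B i:]:] * f ^ i))"
  proof -
    have "emb ([:[:D:]:] * h) = [:[:to_fract D:]:] * emb h"
      by (simp only: rhomD(4)[OF rhom_emb] emb_const)
    also have "\<dots> = [:[:to_fract D:]:] * ([:[:u1:]:] * ([:[:v0:]:] * emb g + (\<Sum>i\<le>n. [:[:coeff F0 i:]:] * emb f ^ i)))"
      by (simp only: h_def eq sub)
    also have "\<dots> = [:[:to_fract D * (u1 * v0):]:] * emb g + (\<Sum>i\<le>n. [:[:to_fract D * (u1 * coeff F0 i):]:] * emb f ^ i)"
      by (simp only: distrib_left sum_distrib_left C2_mult' mult.assoc)
    also have "\<dots> = [:[:to_fract A:]:] * emb g + (\<Sum>i\<le>n. [:[:to_fract (B i):]:] * emb f ^ i)"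
    proof -
      have e2: "(\<Sum>i\<le>n. [:[:to_fract D * (u1 * coeff F0 i):]:] * emb f ^ i) = (\<Sum>i\<le>n. [:[:to_fract (B i):]:] * emb f ^ i)"
      proof (rule sum.cong[OF refl])
        fix i assume "i \<in> {..n}"
        then have "to_fract D * (u1 * coeff F0 i) = to_fract (B i)" using B by blast
        then show "[:[:to_fract D * (u1 * coeff F0 i):]:] * emb f ^ i = [:[:to_fract (B i):]:] * emb f ^ i"
          by (simp only:)
      qed
      show ?thesis by (simp only: A e2)
    qed
    also have "\<dots> = emb ([:[:A:]:] * g + (\<Sum>i\<le>n. [:[:B i:]:] * f ^ i))"
      by (simp only: rhomD(3,4)[OF rhom_emb] rhom_sum[OF rhom_emb] rhom_power[OF rhom_emb] emb_const)
    finally show ?thesis .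
  qed
  then have hD: "[:[:D:]:] * h = [:[:A:]:] * g + (\<Sum>i\<le>n. [:[:B i:]:] * f ^ i)" by (rule emb_inj)
  have "[:[:D:]:] dvd ([:[:A:]:] * g + (\<Sum>i\<le>n. [:[:B i:]:] * f ^ i))"
    unfolding hD[symmetric] by (rule dvd_triv_left)
  then have "D dvd A \<and> (\<forall>i\<le>n. D dvd B i)"
    by (rule clear[OF assms(2,3,5,6) D(1)])
  then have Ad: "D dvd A" and Bd: "\<forall>i\<le>n. D dvd B i" by auto
  from Ad obtain a where a: "A = D * a" by (rule dvdE)
  define b where "b i = B i div D" for i
  have Bi: "B i = D * b i" if "i \<le> n" for i using Bd that by (simp add: b_def)
  have "(\<Sum>i\<le>n. [:[:B i:]:] * f ^ i) = (\<Sum>i\<le>n. [:[:D:]:] * ([:[:b i:]:] * f ^ i))"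
  proof (intro sum.cong refl)
    fix i assume "i \<in> {..n}"
    then have "B i = D * b i" using Bi by simp
    then show "[:[:B i:]:] * f ^ i = [:[:D:]:] * ([:[:b i:]:] * f ^ i)"
      by (simp only: C2_mult mult.assoc)
  qed
  then have hD2: "[:[:D:]:] * h = [:[:D:]:] * ([:[:a:]:] * g + (\<Sum>i\<le>n. [:[:b i:]:] * f ^ i))"
    unfolding hD a C2_mult by (simp only: sum_distrib_left distrib_left mult.assoc)
  have Dnz: "[:[:D:]:] \<noteq> (0::'k pxyz)" using D(1) by simp
  have hh: "h = [:[:a:]:] * g + (\<Sum>i\<le>n. [:[:b i:]:] * f ^ i)"
    using hD2 unfolding mult_left_cancel[OF Dnz] .
  have c10: "cf h (Suc 0) 0 = a * cf g (Suc 0) 0 + (\<Sum>i\<le>n. b i * cf (f ^ i) (Suc 0) 0)"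
    unfolding hh by (simp add: cf_sum)
  have c01: "cf h 0 (Suc 0) = a * cf g 0 (Suc 0) + (\<Sum>i\<le>n. b i * cf (f ^ i) 0 (Suc 0))"
    unfolding hh by (simp add: cf_sum)
  have d1: "r dvd cf h (Suc 0) 0" unfolding c10
    by (intro dvd_add dvd_sum dvd_mult[OF rg1] dvd_mult[OF conjunct1[OF r_dvd_pow[OF rf1 rf2]]])
  have d2: "r dvd cf h 0 (Suc 0)" unfolding c01
    by (intro dvd_add dvd_sum dvd_mult[OF rg2] dvd_mult[OF conjunct2[OF r_dvd_pow[OF rf1 rf2]]])
  have "is_unit r" by (rule partA[OF aut]) (use d1 d2 in \<open>simp_all add: h_def One_nat_def\<close>)
  then have "r \<noteq> 0" by auto
  then have "degree r = 0" using is_unit_iff_degree[OF \<open>r \<noteq> 0\<close>] \<open>is_unit r\<close> by simp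
  then show False using assms(1) unfolding r_def by simp
qed

end
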